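(* For every integer $n\ge 1$, $$a_n\ge\max\{\tau(n),\tau(2n-1),\tau_o(n+1)\},$$ and more precisely $$a_n\ge \tau(n)+\tau(2n-1)+\tau_o(n+1)-3-\delta_{n\equiv 0 \bmod 2}-\delta_{n\equiv -1\bmod 3}.$$
   Context: For an integer $n\ge1$, $a_n$ denotes the number of integers $x$ with $0\le x\le n-1$ for which there exists a positive integer $h$ with $h\mid x$ and $(2x+1)\mid(2n-2h+1)$ (every positive integer divides $0$). $\tau(m)$ is the number of positive divisors of $m$, $\tau_o(m)$ is the number of odd positive divisors of $m$, and $\delta_P$ equals $1$ if the condition $P$ holds and $0$ otherwise. *)

theory Defs
  imports Main
begin

definition a_seq :: "nat \<Rightarrow> nat" where
  "a_seq n = card {x::nat. x \<le> n - 1 \<and>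
      (\<exists>h::nat. 0 < h \<and> h dvd x \<and> int (2*x+1) dvd (2 * int n - 2 * int h + 1))}"

definition tau :: "nat \<Rightarrow> nat" where
  "tau m = card {d::nat. 0 < d \<and> d dvd m}"

definition tau_odd :: "nat \<Rightarrow> nat" where
  "tau_odd m = card {d::nat. 0 < d \<and> d dvd m \<and> odd d}"

definition delta :: "bool \<Rightarrow> int" where
  "delta P = (if P then 1 else 0)"

end

theory Submission
  imports Defs
begin

lemma half_le: assumes "(d::nat) dvd n" "0 < d" "d < n" shows "2*d \<le> n"
proof -
  obtain k where k: "n = d*k" using assms(1) by blast
  have "k \<noteq> 0" using k assms by auto
  moreover have "k \<noteq> 1" using k assms by auto
  ultimately have "k \<ge> 2" by auto
  hence "d*2 \<le> d*k" by (intro mult_le_mono2)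
  thus ?thesis using k by simp
qed

lemma odd_of_dvd_odd: assumes "(e::nat) dvd m" "odd m" shows "odd e"
  using assms by (auto elim: dvd_trans[rotated])

lemma AB_int:
  fixes n d e :: nat
  assumes n: "n \<ge> 1" and d: "d dvd n" "0 < d" and e: "e dvd 2*n-1" "0 < e"
    and eq: "n - d = (e - 1) div 2"
  shows "n - d = 0 \<or> n - d = n - 1"
proof (cases "d < n")
  case False thus ?thesis by auto
next
  case True
  have "odd (2*n-1)" using n by auto
  hence oe: "odd e" using e odd_of_dvd_odd by blast
  hence ee: "e = 2*n - 2*d + 1" using eq True by presburger
  have hd: "2*d \<le> n" using half_le[OF d True] .
  obtain m where m: "2*n-1 = e*m" using e by blast
  have "m \<noteq> 0" proof assume "m = 0" thus False using m n by simp qed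
  show ?thesis
  proof (cases "m = 1")
    case True thus ?thesis using m ee by auto
  next
    case False
    with \<open>m \<noteq> 0\<close> have "m \<ge> 2" by auto
    hence "e*2 \<le> e*m" by (intro mult_le_mono2)
    thus ?thesis using m ee hd by linarith
  qed
qed

lemma AC_int:
  fixes n d e :: nat
  assumes n: "n \<ge> 1" and d: "d dvd n" "0 < d" and e: "e dvd n+1" "odd e"
    and eq: "n - d = (e - 1) div 2"
  shows "n - d = 0 \<or> (even n \<and> n - d = n div 2)"
proof (cases "d < n")
  case False thus ?thesis by auto
next
  case True
  hence ee: "e = 2*n - 2*d + 1" using eq e(2) by presburger
  have hd: "2*d \<le> n" using half_le[OF d True] .
  obtain m where m: "n+1 = e*m" using e by blast
  have "m \<noteq> 0" proof assume "m = 0" thus False using m n by simp qed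
  show ?thesis
  proof (cases "m = 1")
    case True thus ?thesis using m ee hd by presburger
  next
    case False
    with \<open>m \<noteq> 0\<close> have "m \<ge> 2" by auto
    hence "e*2 \<le> e*m" by (intro mult_le_mono2)
    thus ?thesis using m ee hd by linarith
  qed
qed

lemma BC_int:
  fixes n d e :: nat
  assumes n: "n \<ge> 1" and d: "d dvd 2*n-1" "0 < d" and e: "e dvd n+1" "odd e"
    and eq: "(d - 1) div 2 = (e - 1) div 2"
  shows "(e - 1) div 2 = 0 \<or> ((e - 1) div 2 = 1 \<and> n mod 3 = 2)"
proof -
  have "odd (2*n-1)" using n by auto
  hence "odd d" using d odd_of_dvd_odd by blast
  hence de: "d = e" using eq e(2) by presburger
  have "e dvd 2*(n+1)" using e(1) by (rule dvd_mult)
  moreover have "e dvd 2*n-1" using d de by simp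
  ultimately have "e dvd 2*(n+1) - (2*n-1)" by (rule dvd_diff_nat)
  moreover have "2*(n+1) - (2*n-1) = 3" using n by auto
  ultimately have "e dvd 3" by simp
  moreover have "e > 0" using e(2) by (cases e) auto
  ultimately have "e \<le> 3" "e > 0" by (auto intro: dvd_imp_le)
  hence "e = 1 \<or> e = 2 \<or> e = 3" by auto
  moreover {
    assume "e = 3" hence "3 dvd n + 1" using e by simp
    hence "n mod 3 = 2" by presburger }
  ultimately show ?thesis using e(2) by auto
qed

theorem theorem10:
  fixes n :: nat
  assumes "n \<ge> 1"
  shows "a_seq n \<ge> Max {tau n, tau (2*n - 1), tau_odd (n + 1)}
     \<and> int (a_seq n) \<ge> int (tau n) + int (tau (2*n - 1)) + int (tau_odd (n + 1)) - 3
          - delta (n mod 2 = 0) - delta (n mod 3 = 2)"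
proof -
  let ?S = "{x::nat. x \<le> n - 1 \<and>
      (\<exists>h::nat. 0 < h \<and> h dvd x \<and> int (2*x+1) dvd (2 * int n - 2 * int h + 1))}"
  define DA where "DA = {d::nat. 0 < d \<and> d dvd n}"
  define DB where "DB = {d::nat. 0 < d \<and> d dvd (2*n-1)}"
  define DC where "DC = {d::nat. 0 < d \<and> d dvd (n+1) \<and> odd d}"
  define A where "A = (\<lambda>d. n - d) ` DA"
  define B where "B = (\<lambda>d. (d - 1) div 2) ` DB"
  define C where "C = (\<lambda>d. (d - 1) div 2) ` DC"
  have fS: "finite ?S" by (rule finite_subset[of _ "{..n-1}"]) auto
  have oddB: "odd d" if "d \<in> DB" for d
  proof -
    have "odd (2*n-1)" using assms by auto
    thus ?thesis using that odd_of_dvd_odd unfolding DB_def by blast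
  qed
  have cA: "card A = tau n" unfolding A_def tau_def DA_def[symmetric]
    proof (rule card_image, rule inj_onI)
    fix x y assume "x \<in> DA" "y \<in> DA" "n - x = n - y"
    moreover have "x \<le> n" "y \<le> n" using calculation assms by (auto simp: DA_def dest: dvd_imp_le)
    ultimately show "x = y" by simp
  qed
  have cB: "card B = tau (2*n-1)" unfolding B_def tau_def DB_def[symmetric]
    by (rule card_image, rule inj_onI, drule oddB, drule oddB) presburger
  have cC: "card C = tau_odd (n+1)" unfolding C_def tau_odd_def DC_def[symmetric]
    proof (rule card_image, rule inj_onI)
    fix x y assume "x \<in> DC" "y \<in> DC" "(x - 1) div 2 = (y - 1) div 2"
    moreover have "odd x" "odd y" using calculation by (auto simp: DC_def)
    ultimately show "x = y" by presburger
  qed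
  have AS: "A \<subseteq> ?S"
  proof
    fix x assume "x \<in> A"
    then obtain d where d: "d \<in> DA" "x = n - d" unfolding A_def by auto
    have "d \<le> n" using d assms by (auto simp: DA_def dest: dvd_imp_le)
    hence "int (2*x+1) = 2 * int n - 2 * int d + 1" using d by auto
    moreover have "d dvd x" using d by (auto simp: DA_def)
    ultimately show "x \<in> ?S" using d assms by (auto simp: DA_def add.commute intro!: exI[of _ d])
  qed
  have BS: "B \<subseteq> ?S"
  proof
    fix x assume "x \<in> B"
    then obtain d where d: "d \<in> DB" "x = (d - 1) div 2" unfolding B_def by auto
    have "odd d" using oddB d by auto
    hence "2*x+1 = d" using d by presburger
    moreover have "d \<le> 2*n-1" using d assms by (auto simp: DB_def dest: dvd_imp_le)
    moreover have "int d dvd int (2*n-1)" using d by (auto simp: DB_def)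
    moreover have "int (2*n-1) = 2 * int n - 2 * int 1 + 1" using assms by auto
    ultimately have "int (2*x+1) dvd 2 * int n - 2 * int 1 + 1" by metis
    moreover have "x \<le> n - 1" using \<open>2*x+1 = d\<close> \<open>d \<le> 2*n-1\<close> by linarith
    ultimately show "x \<in> ?S" by (auto intro!: exI[of _ 1])
  qed
  have CS: "C \<subseteq> ?S"
  proof
    fix x assume "x \<in> C"
    then obtain d where d: "d \<in> DC" "x = (d - 1) div 2" unfolding C_def by auto
    have dx: "2*x+1 = d" using d by (auto simp: DC_def)
    have "d \<le> n+1" using d by (auto simp: DC_def dest: dvd_imp_le)
    have xle: "x \<le> n - 1"
    proof (cases "n = 1")
      case True
      hence "d dvd 2" using d by (simp add: DC_def numeral_2_eq_2)
      hence "d \<le> 2" by (auto dest: dvd_imp_le)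
      thus ?thesis using dx by auto
    next
      case False thus ?thesis using dx \<open>d \<le> n+1\<close> assms by auto
    qed
    show "x \<in> ?S"
    proof (cases "x = 0")
      case True thus ?thesis by (auto intro!: exI[of _ 1])
    next
      case False
      have "int d dvd int (n+1)" using d unfolding DC_def by (simp only: int_dvd_int_iff mem_Collect_eq)
      hence "int d dvd 2 * int (n+1) - int d" by (intro dvd_diff dvd_mult) auto
      moreover have "2 * int (n+1) - int d = 2 * int n - 2 * int x + 1" using dx by auto
      ultimately show ?thesis using xle False dx by (auto simp: add.commute intro!: exI[of _ x])
    qed
  qed
  have fA: "finite A" using AS fS finite_subset by blast
  have fB: "finite B" using BS fS finite_subset by blast
  have fC: "finite C" using CS fS finite_subset by blast
  have U: "A \<union> B \<union> C \<subseteq> ?S" using AS BS CS by auto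
  have cU: "card (A \<union> B \<union> C) \<le> a_seq n" unfolding a_seq_def by (rule card_mono[OF fS U])
  have "tau n \<le> a_seq n" using card_mono[OF fS AS] cA unfolding a_seq_def by simp
  moreover have "tau (2*n-1) \<le> a_seq n" using card_mono[OF fS BS] cB unfolding a_seq_def by simp
  moreover have "tau_odd (n+1) \<le> a_seq n" using card_mono[OF fS CS] cC unfolding a_seq_def by simp
  ultimately have P1: "a_seq n \<ge> Max {tau n, tau (2*n - 1), tau_odd (n + 1)}" by simp
  have ABsub: "A \<inter> B \<subseteq> {0, n-1}"
  proof
    fix x assume "x \<in> A \<inter> B"
    then obtain d e where "d \<in> DA" "x = n - d" "e \<in> DB" "x = (e-1) div 2"
      unfolding A_def B_def by auto
    thus "x \<in> {0, n-1}" using AB_int[OF assms, of d e] by (auto simp: DA_def DB_def)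
  qed
  define Y where "Y = (if even n then {n div 2} else {}) \<union> (if n mod 3 = 2 then {1} else {})"
  have CABsub: "C \<inter> (A \<union> B) \<subseteq> {0} \<union> Y"
  proof
    fix x assume x: "x \<in> C \<inter> (A \<union> B)"
    then obtain e where e: "e \<in> DC" "x = (e-1) div 2" unfolding C_def by auto
    from x have "x \<in> A \<or> x \<in> B" by auto
    thus "x \<in> {0} \<union> Y"
    proof
      assume "x \<in> A"
      then obtain d where "d \<in> DA" "x = n - d" unfolding A_def by auto
      thus ?thesis using AC_int[OF assms, of d e] e by (auto simp: DA_def DC_def Y_def)
    next
      assume "x \<in> B"
      then obtain d where "d \<in> DB" "x = (d-1) div 2" unfolding B_def by auto
      thus ?thesis using BC_int[OF assms, of d e] e by (auto simp: DB_def DC_def Y_def)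
    qed
  qed
  have cY: "int (card Y) \<le> delta (n mod 2 = 0) + delta (n mod 3 = 2)"
  proof -
    have "card Y \<le> card (if even n then {n div 2} else {}) + card (if n mod 3 = 2 then {1::nat} else {})"
      unfolding Y_def by (rule card_Un_le)
    thus ?thesis by (auto simp: delta_def split: if_splits)
  qed
  have c1: "card (A \<inter> B) \<le> 2"
  proof -
    have "card (A \<inter> B) \<le> card {0, n-1}" by (rule card_mono[OF _ ABsub]) simp
    also have "\<dots> \<le> 2" by (simp add: card_insert_if)
    finally show ?thesis .
  qed
  have c2: "card (C \<inter> (A \<union> B)) \<le> 1 + card Y"
  proof -
    have "finite Y" unfolding Y_def by auto
    hence "card (C \<inter> (A \<union> B)) \<le> card ({0} \<union> Y)" using card_mono[OF _ CABsub] by auto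
    also have "\<dots> \<le> 1 + card Y" using card_Un_le[of "{0}" Y] by simp
    finally show ?thesis .
  qed
  have e1: "card (A \<union> B \<union> C) = card (A \<union> B) + card (C - (A \<union> B))"
    using fA fB fC by (metis Un_Diff_cancel card_Un_disjoint Diff_disjoint finite_Diff finite_UnI)
  have e2: "card (A \<union> B) = card A + card (B - A)"
    using fA fB by (metis Un_Diff_cancel card_Un_disjoint Diff_disjoint finite_Diff)
  have e3: "card (B - A) = card B - card (B \<inter> A)"
    using fB by (simp add: card_Diff_subset_Int)
  have e4: "card (C - (A \<union> B)) = card C - card (C \<inter> (A \<union> B))"
    using fC by (simp add: card_Diff_subset_Int)
  have "card (B \<inter> A) \<le> card B" using fB by (simp add: card_mono)
  moreover have "card (C \<inter> (A \<union> B)) \<le> card C" using fC by (simp add: card_mono)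
  moreover have "B \<inter> A = A \<inter> B" by auto
  ultimately have "card A + card B + card C \<le> card (A \<union> B \<union> C) + 3 + card Y"
    using e1 e2 e3 e4 c1 c2 by simp
  hence "int (card (A \<union> B \<union> C)) \<ge> int (card A) + int (card B) + int (card C) - 3 - int (card Y)"
    by linarith
  hence P2: "int (a_seq n) \<ge> int (tau n) + int (tau (2*n - 1)) + int (tau_odd (n + 1)) - 3
          - delta (n mod 2 = 0) - delta (n mod 3 = 2)"
    using cU cA cB cC cY by linarith
  show ?thesis using P1 P2 by blast
qed

end
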